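(* Let $G$ be a group, $F$ a field of characteristic $0$, and let $R=M_n(F)$ carry an elementary $G$-grading (induced by an arbitrary tuple $(g_1,\dots,g_n)\in G^n$). If $m=x_1x_2\cdots x_k$ is a multilinear graded monomial which is a graded identity of $R$ and $k>n$, then there is a graded monomial identity $N$ of $R$ of length at most $n$ such that $m$ belongs to the $T_G$-ideal generated by $N$. Consequently, all graded monomial identities of $R$ follow from those of length at most $n$.
   Context: The elementary $G$-grading on $M_n(F)$ induced by $(g_1,\dots,g_n)\in G^n$ is $R=\bigoplus_g R_g$ with $R_g=\mathrm{span}\{e_{pq}: g_p^{-1}g_q=g\}$. Graded polynomials live in the free $G$-graded algebra on a set of variables each having a prescribed degree in $G$; a graded polynomial is a graded identity of $R$ if it vanishes under every substitution of each variable $x$ by an element of $R_{\deg x}$. The length of a monomial is its usual degree (number of variables counted with multiplicity). A $T_G$-ideal is an ideal of the free $G$-graded algebra invariant under all endomorphisms preserving the degrees of variables. *)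

theory Defs
  imports "Jordan_Normal_Form.Matrix"
begin

text \<open>Graded variables: a variable is a pair (i, g); its G-degree is g.
  There are countably many variables of each degree.  The group G is a
  (not necessarily commutative) type of class group_add, written additively.\<close>

type_synonym 'g gvar = "nat \<times> 'g"

definition wdeg :: "'g::group_add gvar list \<Rightarrow> 'g" where
  "wdeg w = foldr (\<lambda>x acc. snd x + acc) w 0"

text \<open>Free G-graded (unital, associative) algebra over F: finitely supported
  functions from words to coefficients.\<close>
definition FA :: "('g gvar list \<Rightarrow> 'a::field) set" where
  "FA = {p. finite {w. p w \<noteq> 0}}"

definition mon :: "'g gvar list \<Rightarrow> ('g gvar list \<Rightarrow> 'a::field)" where
  "mon w = (\<lambda>u. if u = w then 1 else 0)"

definition fa_add :: "('g gvar list \<Rightarrow> 'a::field) \<Rightarrow> ('g gvar list \<Rightarrow> 'a) \<Rightarrow> ('g gvar list \<Rightarrow> 'a)" where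
  "fa_add p q = (\<lambda>u. p u + q u)"

definition fa_smult :: "'a::field \<Rightarrow> ('g gvar list \<Rightarrow> 'a) \<Rightarrow> ('g gvar list \<Rightarrow> 'a)" where
  "fa_smult c p = (\<lambda>u. c * p u)"

definition fa_mult :: "('g gvar list \<Rightarrow> 'a::field) \<Rightarrow> ('g gvar list \<Rightarrow> 'a) \<Rightarrow> ('g gvar list \<Rightarrow> 'a)" where
  "fa_mult p q = (\<lambda>w. \<Sum>(u, v) \<in> {(u, v). u @ v = w}. p u * q v)"

definition fa_homog :: "'g::group_add \<Rightarrow> ('g gvar list \<Rightarrow> 'a::field) \<Rightarrow> bool" where
  "fa_homog g p \<longleftrightarrow> p \<in> FA \<and> (\<forall>w. p w \<noteq> 0 \<longrightarrow> wdeg w = g)"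

text \<open>Graded endomorphisms: determined by a substitution sending each variable
  to a homogeneous element of the same degree.\<close>
definition graded_subst :: "('g::group_add gvar \<Rightarrow> ('g gvar list \<Rightarrow> 'a::field)) \<Rightarrow> bool" where
  "graded_subst \<sigma> \<longleftrightarrow> (\<forall>x. fa_homog (snd x) (\<sigma> x))"

fun subst_word :: "('g gvar \<Rightarrow> ('g gvar list \<Rightarrow> 'a::field)) \<Rightarrow> 'g gvar list \<Rightarrow> ('g gvar list \<Rightarrow> 'a)" where
  "subst_word \<sigma> [] = mon []"
| "subst_word \<sigma> (x # w) = fa_mult (\<sigma> x) (subst_word \<sigma> w)"

definition subst_poly :: "('g gvar \<Rightarrow> ('g gvar list \<Rightarrow> 'a::field)) \<Rightarrow> ('g gvar list \<Rightarrow> 'a) \<Rightarrow> ('g gvar list \<Rightarrow> 'a)" where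
  "subst_poly \<sigma> p = (\<lambda>u. \<Sum>w \<in> {w. p w \<noteq> 0}. p w * subst_word \<sigma> w u)"

inductive_set TG_ideal :: "('g::group_add gvar list \<Rightarrow> 'a::field) \<Rightarrow> ('g gvar list \<Rightarrow> 'a) set"
  for f :: "'g gvar list \<Rightarrow> 'a" where
  gen: "f \<in> TG_ideal f"
| zero: "(\<lambda>_. 0) \<in> TG_ideal f"
| add: "p \<in> TG_ideal f \<Longrightarrow> q \<in> TG_ideal f \<Longrightarrow> fa_add p q \<in> TG_ideal f"
| smult: "p \<in> TG_ideal f \<Longrightarrow> fa_smult c p \<in> TG_ideal f"
| mult_left: "p \<in> TG_ideal f \<Longrightarrow> a \<in> FA \<Longrightarrow> fa_mult a p \<in> TG_ideal f"
| mult_right: "p \<in> TG_ideal f \<Longrightarrow> a \<in> FA \<Longrightarrow> fa_mult p a \<in> TG_ideal f"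
| subst: "p \<in> TG_ideal f \<Longrightarrow> graded_subst \<sigma> \<Longrightarrow> subst_poly \<sigma> p \<in> TG_ideal f"

definition elem_comp :: "nat \<Rightarrow> (nat \<Rightarrow> 'g::group_add) \<Rightarrow> 'g \<Rightarrow> 'a::field mat set" where
  "elem_comp n gs h = {A \<in> carrier_mat n n.
     \<forall>p<n. \<forall>q<n. A $$ (p, q) \<noteq> 0 \<longrightarrow> - gs p + gs q = h}"

definition eval_word :: "nat \<Rightarrow> ('g gvar \<Rightarrow> 'a::field mat) \<Rightarrow> 'g gvar list \<Rightarrow> 'a mat" where
  "eval_word n \<phi> w = foldr (\<lambda>x M. \<phi> x * M) w (1\<^sub>m n)"

definition is_graded_mon_identity :: "nat \<Rightarrow> (nat \<Rightarrow> 'g::group_add) \<Rightarrow> 'a::field itself \<Rightarrow> 'g gvar list \<Rightarrow> bool" where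
  "is_graded_mon_identity n gs TYPE_a w \<longleftrightarrow>
     (\<forall>\<phi> :: 'g gvar \<Rightarrow> 'a mat. (\<forall>x. \<phi> x \<in> elem_comp n gs (snd x)) \<longrightarrow>
        eval_word n \<phi> w = 0\<^sub>m n n)"

end

theory Submission
  imports Defs
begin

lemma wdeg_Nil[simp]: "wdeg [] = 0" by (simp add: wdeg_def)
lemma wdeg_Cons[simp]: "wdeg (x # w) = snd x + wdeg w" by (simp add: wdeg_def)
lemma wdeg_append[simp]: "wdeg (u @ v) = wdeg u + wdeg v"
  by (induction u) (auto simp: add.assoc)

lemma mon_nonzero: "{w. (mon v :: _ \<Rightarrow> 'a::field) w \<noteq> 0} = {v}"
  by (auto simp: mon_def)

lemma mon_FA: "(mon v :: _ \<Rightarrow> 'a::field) \<in> FA"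
  by (simp add: FA_def mon_nonzero)

lemma split_set_finite: "finite {(u, v). u @ v = (w::'x list)}"
proof -
  have "{(u, v). u @ v = w} \<subseteq> (\<lambda>i. (take i w, drop i w)) ` {0..length w}"
  proof
    fix p assume "p \<in> {(u, v). u @ v = w}"
    then obtain u v where p: "p = (u,v)" "u @ v = w" by auto
    then show "p \<in> (\<lambda>i. (take i w, drop i w)) ` {0..length w}"
      by (auto intro!: image_eqI[where x="length u"])
  qed
  then show ?thesis by (rule finite_subset) simp
qed

lemma mon_mult: "fa_mult (mon u) (mon v) = (mon (u @ v) :: _ \<Rightarrow> 'a::field)"
proof
  fix w
  have "fa_mult (mon u) (mon v) w = (\<Sum>p \<in> {(a, b). a @ b = w}. if p = (u, v) then (1::'a) else 0)"
    unfolding fa_mult_def by (rule sum.cong) (auto simp: mon_def split: if_splits)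
  also have "\<dots> = (if (u,v) \<in> {(a, b). a @ b = w} then 1 else 0)"
    using split_set_finite[of w] by (simp add: sum.delta')
  also have "\<dots> = mon (u @ v) w" by (auto simp: mon_def)
  finally show "fa_mult (mon u) (mon v) w = (mon (u @ v) :: _ \<Rightarrow> 'a) w" .
qed

lemma subst_poly_mon: "subst_poly \<sigma> (mon N :: _ \<Rightarrow> 'a::field) = subst_word \<sigma> N"
  unfolding subst_poly_def mon_nonzero by (simp add: mon_def)

lemma eval_word_Nil[simp]: "eval_word n \<phi> [] = 1\<^sub>m n" by (simp add: eval_word_def)
lemma eval_word_Cons[simp]: "eval_word n \<phi> (x # w) = \<phi> x * eval_word n \<phi> w"
  by (simp add: eval_word_def)

lemma eval_word_path:
  fixes \<phi> :: "'g::group_add gvar \<Rightarrow> 'a::field mat"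
  assumes gr: "\<And>x. \<phi> x \<in> elem_comp n gs (snd x)"
  shows "eval_word n \<phi> w \<in> carrier_mat n n \<and>
    (\<forall>p<n. \<forall>q<n. eval_word n \<phi> w $$ (p,q) \<noteq> 0 \<longrightarrow>
        (\<forall>i\<le>length w. gs p + wdeg (take i w) \<in> gs ` {..<n}))"
proof (induction w)
  case Nil
  then show ?case by auto
next
  case (Cons x w)
  have cx: "\<phi> x \<in> carrier_mat n n" using gr[of x] by (simp add: elem_comp_def)
  have cw: "eval_word n \<phi> w \<in> carrier_mat n n" using Cons by simp
  show ?case
  proof (intro conjI allI impI)
    show "eval_word n \<phi> (x # w) \<in> carrier_mat n n" using cx cw by simp
  next
    fix p q i assume p: "p < n" and q: "q < n"
      and nz: "eval_word n \<phi> (x # w) $$ (p, q) \<noteq> 0" and i: "i \<le> length (x # w)"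
    have "eval_word n \<phi> (x # w) $$ (p, q) = (\<Sum>r<n. \<phi> x $$ (p, r) * eval_word n \<phi> w $$ (r, q))"
      using cx cw p q by (simp add: scalar_prod_def lessThan_atLeast0 mult.commute)
    with nz obtain r where r: "r < n" and nz1: "\<phi> x $$ (p, r) \<noteq> 0"
      and nz2: "eval_word n \<phi> w $$ (r, q) \<noteq> 0"
      by (metis (no_types, lifting) lessThan_iff mult_zero_left mult_zero_right sum.neutral)
    have "- gs p + gs r = snd x"
      using gr[of x] nz1 p r unfolding elem_comp_def by auto
    then have gr_r: "gs r = gs p + snd x" by (metis add_minus_cancel)
    show "gs p + wdeg (take i (x # w)) \<in> gs ` {..<n}"
    proof (cases i)
      case 0
      then show ?thesis using p by simp
    next
      case (Suc j)
      then have "j \<le> length w" using i by simp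
      then have "gs r + wdeg (take j w) \<in> gs ` {..<n}" using Cons r q nz2 by blast
      then show ?thesis using Suc gr_r by (simp add: add.assoc)
    qed
  qed
qed

lemma no_path_identity:
  fixes gs :: "nat \<Rightarrow> 'g::group_add" and w :: "'g gvar list"
  assumes "\<forall>p<n. \<exists>i\<le>length w. gs p + wdeg (take i w) \<notin> gs ` {..<n}"
  shows "is_graded_mon_identity n gs TYPE('a::field) w"
  unfolding is_graded_mon_identity_def
proof (intro allI impI)
  fix \<phi> :: "'g gvar \<Rightarrow> 'a mat" assume gr: "\<forall>x. \<phi> x \<in> elem_comp n gs (snd x)"
  note E = eval_word_path[of \<phi> n gs w, OF gr[rule_format]]
  show "eval_word n \<phi> w = 0\<^sub>m n n"
  proof (rule eq_matI)
    fix p q assume "p < dim_row (0\<^sub>m n n :: 'a mat)" "q < dim_col (0\<^sub>m n n :: 'a mat)"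
    then have pq: "p < n" "q < n" by auto
    show "eval_word n \<phi> w $$ (p, q) = 0\<^sub>m n n $$ (p, q)"
      using E assms pq by force
  qed (use E in auto)
qed

definition U :: "nat \<Rightarrow> nat \<Rightarrow> nat \<Rightarrow> 'a::field mat" where
  "U n a b = mat n n (\<lambda>(i,j). if i = a \<and> j = b then 1 else 0)"

lemma U_dim[simp]: "dim_row (U n a b) = n" "dim_col (U n a b) = n" by (simp_all add: U_def)

lemma U_carrier[simp]: "U n a b \<in> carrier_mat n n" by (simp add: U_def)

lemma U_mult: assumes "b < n" shows "U n a b * U n b c = (U n a c :: 'a::field mat)"
proof (rule eq_matI)
  fix i j assume "i < dim_row (U n a c :: 'a mat)" "j < dim_col (U n a c :: 'a mat)"
  then have ij: "i < n" "j < n" by (auto simp: U_def)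
  have sq: "\<And>P. (if P then (1::'a) else 0) * (if P then 1 else 0) = (if P then 1 else 0)" by simp
  have "(U n a b * U n b c :: 'a mat) $$ (i, j) =
     (\<Sum>r\<in>{0..<n}. (if r = b then (if i = a \<and> j = c then 1 else 0) else (0::'a)))"
    using ij by (auto simp: U_def scalar_prod_def sq intro!: sum.cong)
  also have "\<dots> = U n a c $$ (i, j)" using assms ij by (simp add: U_def)
  finally show "(U n a b * U n b c :: 'a mat) $$ (i, j) = U n a c $$ (i, j)" .
qed (auto simp: U_def)

lemma U_nz: "a < n \<Longrightarrow> b < n \<Longrightarrow> (U n a b :: 'a::field mat) \<noteq> 0\<^sub>m n n"
proof
  assume "a < n" "b < n" "(U n a b :: 'a mat) = 0\<^sub>m n n"
  then have "(U n a b :: 'a mat) $$ (a,b) = 0\<^sub>m n n $$ (a,b)" by simp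
  with \<open>a < n\<close> \<open>b < n\<close> show False by (simp add: U_def)
qed

lemma path_not_identity:
  fixes gs :: "nat \<Rightarrow> 'g::group_add" and w :: "'g gvar list"
  assumes dist: "distinct w" and p0: "p0 < n"
    and path: "\<forall>i\<le>length w. gs p0 + wdeg (take i w) \<in> gs ` {..<n}"
  shows "\<not> is_graded_mon_identity n gs TYPE('a::field) w"
proof
  assume idt: "is_graded_mon_identity n gs TYPE('a::field) w"
  define P where "P i = (SOME q. q < n \<and> gs q = gs p0 + wdeg (take i w))" for i
  have P: "P i < n \<and> gs (P i) = gs p0 + wdeg (take i w)" if "i \<le> length w" for i
  proof -
    from path that obtain q where "q < n" "gs p0 + wdeg (take i w) = gs q" by blast
    then have "\<exists>q. q < n \<and> gs q = gs p0 + wdeg (take i w)" by auto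
    then show ?thesis unfolding P_def by (rule someI_ex)
  qed
  define idx where "idx x = (THE i. i < length w \<and> w!i = x)" for x
  have idx: "idx (w!i) = i" if "i < length w" for i
    unfolding idx_def using dist that by (auto intro!: the_equality simp: nth_eq_iff_index_eq)
  define \<phi> :: "'g gvar \<Rightarrow> 'a mat" where
    "\<phi> x = (if x \<in> set w then U n (P (idx x)) (P (Suc (idx x))) else 0\<^sub>m n n)" for x
  have \<phi>w: "\<phi> (w!i) = U n (P i) (P (Suc i))" if "i < length w" for i
    using that idx[OF that] by (simp add: \<phi>_def)
  have gr: "\<phi> x \<in> elem_comp n gs (snd x)" for x
  proof (cases "x \<in> set w")
    case True
    then obtain i where i: "i < length w" "x = w!i" by (auto simp: in_set_conv_nth)
    have a: "gs (P i) = gs p0 + wdeg (take i w)" using P[of i] i by simp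
    have b: "gs (P (Suc i)) = (gs p0 + wdeg (take i w)) + snd (w!i)"
      using P[of "Suc i"] i by (simp add: take_Suc_conv_app_nth add.assoc)
    have "- gs (P i) + gs (P (Suc i)) = snd x" unfolding a b i(2) by (rule minus_add_cancel)
    then show ?thesis using i \<phi>w[of i] by (auto simp: elem_comp_def U_def)
  next
    case False
    then show ?thesis by (simp add: \<phi>_def elem_comp_def)
  qed
  have carr: "eval_word n \<phi> v \<in> carrier_mat n n" for v
    using eval_word_path[of \<phi> n gs v] gr by blast
  have key: "U n (P 0) (P 0) * eval_word n \<phi> w = U n (P 0) (P j) * eval_word n \<phi> (drop j w)"
    if "j \<le> length w" for j
    using that
  proof (induction j)
    case 0
    then show ?case by simp
  next
    case (Suc j)
    then have j: "j < length w" by simp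
    have d: "drop j w = w!j # drop (Suc j) w" using j by (simp add: Cons_nth_drop_Suc)
    have "U n (P 0) (P j) * eval_word n \<phi> (drop j w)
        = U n (P 0) (P j) * (U n (P j) (P (Suc j)) * eval_word n \<phi> (drop (Suc j) w))"
      using d \<phi>w[OF j] by simp
    also have "\<dots> = (U n (P 0) (P j) * U n (P j) (P (Suc j))) * eval_word n \<phi> (drop (Suc j) w)"
      using carr by (simp add: assoc_mult_mat[symmetric, of _ n n _ n _ n])
    also have "\<dots> = U n (P 0) (P (Suc j)) * eval_word n \<phi> (drop (Suc j) w)"
    proof -
      have "U n (P 0) (P j) * U n (P j) (P (Suc j)) = (U n (P 0) (P (Suc j)) :: 'a mat)"
        by (rule U_mult) (use P[of j] j in simp)
      then show ?thesis by (simp only:)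
    qed
    finally show ?case using Suc by simp
  qed
  have "eval_word n \<phi> w = 0\<^sub>m n n" using idt gr unfolding is_graded_mon_identity_def by blast
  then have "U n (P 0) (P 0) * eval_word n \<phi> w = (0\<^sub>m n n :: 'a mat)" using right_mult_zero_mat[of "U n (P 0) (P 0)" n n n] by simp
  moreover have "U n (P 0) (P 0) * eval_word n \<phi> w = (U n (P 0) (P (length w)) :: 'a mat)"
    using key[of "length w"] by simp
  ultimately show False using U_nz[of "P 0" n "P (length w)"] P[of 0] P[of "length w"] by auto
qed

lemma blocks_exist:
  fixes m :: "'x list" and C :: "nat set"
  assumes "finite C"
  shows "\<exists>L. length L = card C \<and> concat L = take (Max (insert 0 C)) m \<and>
           (\<forall>c\<in>C. \<exists>i\<le>length L. concat (take i L) = take c m)"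
  using assms
proof (induction C rule: finite_linorder_max_induct)
  case empty
  then show ?case by (intro exI[of _ "[]"]) simp
next
  case (insert b A)
  from insert.IH obtain L where L: "length L = card A" "concat L = take (Max (insert 0 A)) m"
    "\<forall>c\<in>A. \<exists>i\<le>length L. concat (take i L) = take c m" by blast
  define pr where "pr = Max (insert 0 A)"
  have prb: "pr \<le> b" unfolding pr_def using insert.hyps insert.prems
    by (auto simp: Max_le_iff less_imp_le)
  have bA: "b \<notin> A" using insert.hyps by auto
  have Mb: "Max (insert 0 (insert b A)) = b" using insert.hyps
    by (intro Max_eqI) (auto simp: less_imp_le)
  define L' where "L' = L @ [take (b - pr) (drop pr m)]"
  have c1: "concat L' = take b m"
  proof -
    have "concat L' = take pr m @ take (b - pr) (drop pr m)" using L(2) by (simp add: L'_def pr_def)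
    also have "\<dots> = take (pr + (b - pr)) m" by (simp add: take_add)
    finally show ?thesis using prb by simp
  qed
  show ?case
  proof (intro exI[of _ L'] conjI)
    show "length L' = card (insert b A)" using L(1) bA insert.hyps by (simp add: L'_def)
    show "concat L' = take (Max (insert 0 (insert b A))) m" using c1 Mb by simp
    show "\<forall>c\<in>insert b A. \<exists>i\<le>length L'. concat (take i L') = take c m"
    proof
      fix c assume "c \<in> insert b A"
      then show "\<exists>i\<le>length L'. concat (take i L') = take c m"
      proof
        assume "c = b"
        then show ?thesis using c1 by (intro exI[of _ "length L'"]) simp
      next
        assume "c \<in> A"
        then obtain i where "i \<le> length L" "concat (take i L) = take c m" using L(3) by blast
        then show ?thesis by (intro exI[of _ i]) (auto simp: L'_def)
      qed
    qed
  qed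
qed

definition mkN :: "'g::group_add gvar list list \<Rightarrow> 'g gvar list" where
  "mkN L = map (\<lambda>i. (i, wdeg (L!i))) [0..<length L]"

lemma wdeg_take_mkN: "j \<le> length L \<Longrightarrow> wdeg (take j (mkN L)) = wdeg (concat (take j L))"
proof (induction j)
  case 0
  then show ?case by (simp add: mkN_def)
next
  case (Suc j)
  have t: "take k (mkN L) = map (\<lambda>i. (i, wdeg (L!i))) [0..<k]" if "k \<le> length L" for k
    using that by (simp add: mkN_def take_map)
  have "wdeg (take (Suc j) (mkN L)) = wdeg (take j (mkN L)) + wdeg (L!j)"
    using Suc.prems t[of "Suc j"] t[of j] by simp
  also have "\<dots> = wdeg (concat (take (Suc j) L))"
    using Suc by (simp add: take_Suc_conv_app_nth)
  finally show ?case .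
qed

definition sig :: "'g::group_add gvar list list \<Rightarrow> 'g gvar \<Rightarrow> ('g gvar list \<Rightarrow> 'a::field)" where
  "sig L x = (if fst x < length L \<and> snd x = wdeg (L ! fst x) then mon (L ! fst x) else mon [x])"

lemma sig_graded:
  fixes L :: "'g::group_add gvar list list"
  shows "graded_subst (sig L :: _ \<Rightarrow> (_ \<Rightarrow> 'a::field))"
  unfolding graded_subst_def fa_homog_def
proof (intro allI conjI)
  fix x :: "'g gvar"
  show "(sig L x :: _ \<Rightarrow> 'a) \<in> FA" by (simp add: sig_def mon_FA)
  show "(sig L x :: _ \<Rightarrow> 'a) w \<noteq> 0 \<longrightarrow> wdeg w = snd x" for w
    by (auto simp: sig_def mon_def)
qed

lemma subst_word_mkN_aux:
  "set is \<subseteq> {..<length L} \<Longrightarrow>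
   subst_word (sig L) (map (\<lambda>i. (i, wdeg (L!i))) is) = (mon (concat (map (\<lambda>i. L!i) is)) :: _ \<Rightarrow> 'a::field)"
  by (induction "is") (auto simp: sig_def mon_mult)

lemma subst_word_mkN: "subst_word (sig L) (mkN L) = (mon (concat L) :: _ \<Rightarrow> 'a::field)"
  using subst_word_mkN_aux[of "[0..<length L]" L, where 'a='a] by (simp add: mkN_def map_nth atLeast0LessThan)

theorem mainTheorem4:
  fixes n :: nat and gs :: "nat \<Rightarrow> 'g::group_add" and m :: "'g gvar list"
  assumes "n \<ge> 1"
    and "distinct m"
    and "length m > n"
    and "is_graded_mon_identity n gs TYPE('a::field_char_0) m"
  shows "\<exists>N. length N \<le> n \<and> is_graded_mon_identity n gs TYPE('a) N
             \<and> (mon m :: 'g gvar list \<Rightarrow> 'a) \<in> TG_ideal (mon N)"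
proof -
  have "\<forall>p<n. \<exists>i. i \<le> length m \<and> gs p + wdeg (take i m) \<notin> gs ` {..<n}"
    using path_not_identity[OF assms(2), where 'a='a] assms(4) by blast
  then obtain f where f: "\<And>p. p < n \<Longrightarrow> f p \<le> length m \<and> gs p + wdeg (take (f p) m) \<notin> gs ` {..<n}"
    by metis
  define C where "C = f ` {..<n}"
  have fC: "finite C" unfolding C_def by simp
  obtain L where L: "length L = card C" "concat L = take (Max (insert 0 C)) m"
    "\<forall>c\<in>C. \<exists>i\<le>length L. concat (take i L) = take c m"
    using blocks_exist[OF fC, of m] by blast
  define N where "N = mkN L"
  define M where "M = Max (insert 0 C)"
  have lenN: "length N = length L" by (simp add: N_def mkN_def)
  have "length N \<le> n" using lenN L(1) card_image_le[of "{..<n}" f] by (simp add: C_def)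
  moreover have "is_graded_mon_identity n gs TYPE('a) N"
  proof (rule no_path_identity, intro allI impI)
    fix p assume p: "p < n"
    then have "f p \<in> C" by (simp add: C_def)
    then obtain i where i: "i \<le> length L" "concat (take i L) = take (f p) m" using L(3) by blast
    have "wdeg (take i N) = wdeg (take (f p) m)"
      using wdeg_take_mkN[OF i(1)] i(2) by (simp add: N_def)
    then show "\<exists>i\<le>length N. gs p + wdeg (take i N) \<notin> gs ` {..<n}"
      using f[OF p] i(1) lenN by (intro exI[of _ i]) simp
  qed
  moreover have "(mon m :: 'g gvar list \<Rightarrow> 'a) \<in> TG_ideal (mon N)"
  proof -
    have "subst_poly (sig L) (mon N) \<in> TG_ideal (mon N :: _ \<Rightarrow> 'a)"
      by (rule TG_ideal.subst[OF TG_ideal.gen sig_graded])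
    moreover have "subst_poly (sig L) (mon N) = (mon (take M m) :: _ \<Rightarrow> 'a)"
      by (simp add: subst_poly_mon N_def subst_word_mkN L(2) M_def)
    ultimately have "(mon (take M m) :: _ \<Rightarrow> 'a) \<in> TG_ideal (mon N)" by simp
    then have "fa_mult (mon (take M m)) (mon (drop M m)) \<in> TG_ideal (mon N :: _ \<Rightarrow> 'a)"
      by (rule TG_ideal.mult_right) (rule mon_FA)
    then show ?thesis by (simp add: mon_mult)
  qed
  ultimately show ?thesis by blast
qed

end
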